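(* Assume that $1 \le t \le r$ and $k \in \mathbb{Z}$. Then we have \begin{equation*} \sum_{s = 0}^r(-1)^s\begin{bmatrix} r \\ s \end{bmatrix} \begin{bmatrix} t + k - s -1 \\ t - 1 \end{bmatrix} \begin{bmatrix} r + k - s \\ r - t \end{bmatrix} = 0. \end{equation*}
   Context: $q$ is an indeterminate, $r \ge 2$ is a fixed integer, $[n] = \frac{q^n - q^{-n}}{q - q^{-1}}$ for $n \in \mathbb{Z}$, $[m]^! = [1][2]\cdots[m]$, and for $n \in \mathbb{Z}$, $m \in \mathbb{N}$, the quantum binomial coefficient is $\begin{bmatrix} n \\ m\end{bmatrix} = \frac{[n][n-1]\cdots[n-m+1]}{[m]^!}$ for $m \ge 1$ and $\begin{bmatrix} n \\ 0\end{bmatrix} = 1$ (so the top entry may be negative). *)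

theory Defs
  imports "HOL-Computational_Algebra.Polynomial" "HOL-Computational_Algebra.Fraction_Field"
begin

definition qvar :: "rat poly fract" where
  "qvar = Fract [:0, 1:] 1"

definition qint :: "int \<Rightarrow> rat poly fract" where
  "qint n = (qvar powi n - qvar powi (-n)) / (qvar - inverse qvar)"

definition qfact :: "nat \<Rightarrow> rat poly fract" where
  "qfact m = (\<Prod>i\<in>{1..m}. qint (int i))"

definition qbinom :: "int \<Rightarrow> nat \<Rightarrow> rat poly fract" where
  "qbinom n m = (if m = 0 then 1 else (\<Prod>i\<in>{0..<m}. qint (n - int i)) / qfact m)"

end

theory Submission imports Defs begin

abbreviation "X \<equiv> qvar"

lemma Fract_pow: "(Fract (a::'a::idom) 1) ^ j = Fract (a ^ j) 1"
  by (induction j) (simp_all add: One_fract_def)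

lemma X_pow: "X ^ j = Fract (monom 1 j) 1"
  unfolding qvar_def Fract_pow by (simp add: monom_altdef)

lemma X_nz: "X \<noteq> 0"
  by (simp add: qvar_def Zero_fract_def eq_fract)

lemma X_pow_ne1: "j > 0 \<Longrightarrow> X ^ j \<noteq> 1"
  by (auto simp add: X_pow One_fract_def eq_fract monom_eq_1_iff)

lemma D_nz: "X - inverse X \<noteq> 0"
proof
  assume "X - inverse X = 0"
  hence "X * X = 1" using X_nz by (simp add: field_simps)
  thus False using X_pow_ne1[of 2] by (simp add: power2_eq_square)
qed

lemma qint_nz: "m \<noteq> 0 \<Longrightarrow> qint m \<noteq> 0"
proof
  assume m: "m \<noteq> 0" and q: "qint m = 0"
  have "X powi m - X powi (-m) = 0" using q D_nz unfolding qint_def divide_eq_0_iff by blast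
  hence a: "X powi m = inverse (X powi m)" unfolding power_int_minus by simp
  have nz: "X powi m \<noteq> 0" using X_nz by simp
  have "X powi m * X powi m = 1"
    using nz a by (metis right_inverse)
  moreover have "X powi (m+m) = X powi m * X powi m" using X_nz by (intro power_int_add) simp
  ultimately have b: "X powi (m + m) = 1" by simp
  show False
  proof (cases "m \<ge> 0")
    case True
    hence "X ^ nat (m+m) = 1" using b power_int_nonneg_exp[of "m+m" X] by simp
    moreover have "nat (m+m) > 0" using True m by simp
    ultimately show False using X_pow_ne1 by blast
  next
    case False
    have "X powi (-(m+m)) = 1" using b unfolding power_int_minus by simp
    hence "X ^ nat (-(m+m)) = 1" using False power_int_nonneg_exp[of "-(m+m)" X] by simp
    moreover have "nat (-(m+m)) > 0" using False by simp
    ultimately show False using X_pow_ne1 by blast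
  qed
qed

lemma qfact_nz: "qfact m \<noteq> 0"
  unfolding qfact_def by (auto simp: qint_nz)

lemma qbinom_alt: "qbinom n m = (\<Prod>i<m. qint (n - int i)) / qfact m"
  by (simp add: qbinom_def qfact_def atLeast0LessThan)

lemma qint_key: "qint (n+1) = X powi (-(int s+1)) * qint (n - int s) + X powi (n - int s) * qint (int s + 1)"
proof -
  define A where "A = X powi n"
  define B where "B = X ^ s"
  have A: "A \<noteq> 0" "B \<noteq> 0" using X_nz by (auto simp: A_def B_def)
  have e1: "X powi (n+1) = A * X" using X_nz by (simp add: A_def power_int_add)
  have e2: "X powi (-(n+1)) = inverse (A * X)" unfolding power_int_minus e1 ..
  have e3: "X powi (int s + 1) = B * X" using X_nz by (simp add: B_def power_int_add)
  have e4: "X powi (-(int s+1)) = inverse (B * X)" unfolding power_int_minus e3 ..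
  have e5: "X powi (n - int s) = A / B" using X_nz by (simp add: A_def B_def power_int_diff)
  have e6: "X powi (-(n - int s)) = B / A" unfolding power_int_minus e5 by (simp add: A(1))
  have e7: "X powi (-(int s + 1)) = inverse (B * X)" by (rule e4)
  have key: "\<And>D::rat poly fract. D \<noteq> 0 \<Longrightarrow> (A*X - inverse(A*X))/D = inverse(B*X) * ((A/B - B/A)/D) + A/B * ((B*X - inverse(B*X))/D)"
    using A X_nz by (simp add: field_simps)
  show ?thesis unfolding qint_def e1 e2 e3 e5 e6 e7 using key[OF D_nz] by simp
qed


lemma qfact_Suc: "qfact (Suc s) = qfact s * qint (int s + 1)"
  unfolding qfact_def by (simp add: prod.cl_ivl_Suc add.commute)

lemma pascal: "qbinom (n+1) (Suc s) = X powi (-(int s+1)) * qbinom n (Suc s) + X powi (n - int s) * qbinom n s"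
proof -
  define P where "P = (\<Prod>i<s. qint (n - int i))"
  have 1: "(\<Prod>i<Suc s. qint (n + 1 - int i)) = qint (n+1) * P"
    unfolding P_def prod.lessThan_Suc_shift by simp
  have 2: "(\<Prod>i<Suc s. qint (n - int i)) = P * qint (n - int s)"
    unfolding P_def by simp
  have Q: "qint (int s + 1) \<noteq> 0" by (rule qint_nz) simp
  show ?thesis unfolding qbinom_alt 1 2 qfact_Suc P_def[symmetric] qint_key[of n s]
    using Q qfact_nz[of s] by (simp add: field_simps)
qed

lemma qbinom_0: "qbinom n 0 = 1" by (simp add: qbinom_def)

lemma qbinom_big: "s > r \<Longrightarrow> qbinom (int r) s = 0"
  unfolding qbinom_alt
proof -
  assume "s > r"
  hence "r \<in> {..<s}" by simp
  moreover have "qint (int r - int r) = 0" by (simp add: qint_def)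
  ultimately have "(\<Prod>i<s. qint (int r - int i)) = 0" by (metis (no_types, lifting) finite_lessThan prod_zero_iff)
  thus "(\<Prod>i<s. qint (int r - int i)) / qfact s = 0" by simp
qed


lemma Xpow_comb: "X powi a * X powi b = X powi (a + b)"
  using X_nz by (simp add: power_int_add)

definition S :: "nat \<Rightarrow> int \<Rightarrow> rat poly fract" where
  "S r c = (\<Sum>s\<le>r. (-1)^s * qbinom (int r) s * X powi (c * int s))"

lemma S_Suc: "S (Suc r) c = (1 - X powi (int r + c)) * S r (c-1)"
proof -
  define g where "g s = (-1)^s * qbinom (int r) s * X powi ((c-1) * int s)" for s
  have gS: "g (Suc r) = 0" by (simp add: g_def qbinom_big)
  have e1: "X powi (-(int s+1)) * X powi (c * int (Suc s)) = X powi ((c-1) * int (Suc s))" for s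
    unfolding Xpow_comb by (simp add: algebra_simps)
  have e2: "X powi (int r - int s) * X powi (c * int (Suc s)) = X powi (int r + c) * X powi ((c-1) * int s)" for s
    unfolding Xpow_comb by (simp add: algebra_simps)
  have t: "(-1)^(Suc s) * qbinom (int (Suc r)) (Suc s) * X powi (c * int (Suc s))
      = g (Suc s) - X powi (int r + c) * g s" for s
  proof -
    have "(-1)^(Suc s) * qbinom (int (Suc r)) (Suc s) * X powi (c * int (Suc s))
      = (-1)^(Suc s) * qbinom (int r) (Suc s) * (X powi (-(int s+1)) * X powi (c * int (Suc s)))
       + (-1)^(Suc s) * qbinom (int r) s * (X powi (int r - int s) * X powi (c * int (Suc s)))"
      using pascal[of "int r" s] by (simp add: algebra_simps)
    also have "\<dots> = g (Suc s) - X powi (int r + c) * g s"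
      unfolding e1 e2 g_def by (simp add: algebra_simps)
    finally show ?thesis .
  qed
  have "S (Suc r) c = 1 + (\<Sum>s\<le>r. g (Suc s) - X powi (int r + c) * g s)"
    unfolding S_def sum.atMost_Suc_shift t by (simp add: qbinom_0)
  also have "\<dots> = (1 + (\<Sum>s\<le>r. g (Suc s))) - X powi (int r + c) * (\<Sum>s\<le>r. g s)"
    by (simp add: sum_subtractf sum_distrib_left)
  also have "1 + (\<Sum>s\<le>r. g (Suc s)) = (\<Sum>s\<le>Suc r. g s)"
    unfolding sum.atMost_Suc_shift by (simp add: g_def qbinom_0)
  also have "\<dots> = (\<Sum>s\<le>r. g s)" using gS by simp
  also have "(\<Sum>s\<le>r. g s) = S r (c-1)" unfolding S_def g_def ..
  finally show ?thesis by (simp add: algebra_simps)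
qed

lemma S_zero: "- (int r - 1) \<le> c \<Longrightarrow> c \<le> int r - 1 \<Longrightarrow> even (c + int r - 1) \<Longrightarrow> S r c = 0"
proof (induction r arbitrary: c)
  case 0
  then show ?case by simp
next
  case (Suc r)
  show ?case
  proof (cases "c = - int r")
    case True
    then show ?thesis by (simp add: S_Suc)
  next
    case False
    have "c \<ge> 2 - int r" using Suc.prems False by simp presburger
    have "S r (c-1) = 0" using Suc.prems False \<open>c \<ge> 2 - int r\<close> by (intro Suc.IH) auto
    then show ?thesis by (simp add: S_Suc)
  qed
qed


definition good :: "nat \<Rightarrow> (nat \<Rightarrow> rat poly fract) \<Rightarrow> bool" where
  "good m g \<longleftrightarrow> (\<exists>p. degree p \<le> m \<and> (\<forall>s. g s = poly p ((X^2)^s) / X^(m*s)))"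

lemma good_mult:
  assumes "good a f" "good b g" shows "good (a+b) (\<lambda>s. f s * g s)"
proof -
  obtain p where p: "degree p \<le> a" "\<And>s. f s = poly p ((X^2)^s) / X^(a*s)" using assms(1) good_def by auto
  obtain q where q: "degree q \<le> b" "\<And>s. g s = poly q ((X^2)^s) / X^(b*s)" using assms(2) good_def by auto
  have "degree (p*q) \<le> a + b" using p(1) q(1) degree_mult_le[of p q] by linarith
  moreover have "f s * g s = poly (p*q) ((X^2)^s) / X^((a+b)*s)" for s
    unfolding p(2) q(2) by (simp add: power_add add_mult_distrib)
  ultimately show ?thesis unfolding good_def by blast
qed

lemma good_div: assumes "good m f" shows "good m (\<lambda>s. f s / c)"
proof -
  obtain p where p: "degree p \<le> m" "\<And>s. f s = poly p ((X^2)^s) / X^(m*s)" using assms good_def by auto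
  have "degree (smult (1/c) p) \<le> m" using p(1) by simp
  moreover have "f s / c = poly (smult (1/c) p) ((X^2)^s) / X^(m*s)" for s
    unfolding p(2) by simp
  ultimately show ?thesis unfolding good_def by blast
qed

lemma good_const: "good 0 (\<lambda>s. 1)"
  unfolding good_def by (rule exI[of _ "[:1:]"]) simp

lemma good_qint: "good 1 (\<lambda>s. qint (a - int s))"
proof -
  define A where "A = X powi a"
  define D where "D = X - inverse X"
  have nz: "A \<noteq> 0" "D \<noteq> 0" "X \<noteq> 0" using X_nz D_nz by (auto simp: A_def D_def)
  define p where "p = [: A / D, - 1 / (A * D) :]"
  have "degree p \<le> 1" by (simp add: p_def)
  moreover have "qint (a - int s) = poly p ((X^2)^s) / X^(1*s)" for s
  proof -
    have e1: "X powi (a - int s) = A / X^s" using X_nz by (simp add: A_def power_int_diff)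
    have e2: "X powi (-(a - int s)) = X^s / A" unfolding power_int_minus e1 using nz by simp
    have sq: "X^(s*2) = X^s * X^s" by (simp add: mult_2_right power_add)
    show ?thesis unfolding qint_def e1 e2 D_def[symmetric] p_def using nz sq
      by (simp add: field_simps power_mult_distrib power_mult[symmetric] mult.commute)
  qed
  ultimately show ?thesis unfolding good_def by blast
qed

lemma good_prod: "good m (\<lambda>s. \<Prod>i<m. qint (n - int s - int i))"
proof (induction m)
  case 0
  then show ?case using good_const by simp
next
  case (Suc m)
  have "good (m+1) (\<lambda>s. (\<Prod>i<m. qint (n - int s - int i)) * qint ((n - int m) - int s))"
    by (rule good_mult[OF Suc.IH good_qint])
  then show ?case by (simp add: algebra_simps)
qed

lemma good_qbinom: "good m (\<lambda>s. qbinom (n - int s) m)"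
  unfolding qbinom_alt using good_div[OF good_prod[of m n], of "qfact m"]
  by (simp add: algebra_simps)

lemma vanish:
  assumes "r \<ge> 1" "good (r-1) g"
  shows "(\<Sum>s\<le>r. (-1)^s * qbinom (int r) s * g s) = 0"
proof -
  define m where "m = r - 1"
  obtain p where p: "degree p \<le> m" "\<And>s. g s = poly p ((X^2)^s) / X^(m*s)" using assms(2) good_def m_def by auto
  have g: "g s = (\<Sum>j\<le>m. coeff p j * X powi ((2 * int j - int m) * int s))" for s
  proof -
    have "poly p ((X^2)^s) = (\<Sum>j\<le>m. coeff p j * ((X^2)^s)^j)"
      unfolding poly_altdef using p(1)
      by (intro sum.mono_neutral_left) (auto simp: coeff_eq_0)
    hence "g s = (\<Sum>j\<le>m. coeff p j * (((X^2)^s)^j / X^(m*s)))"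
      unfolding p(2) by (simp add: sum_divide_distrib)
    also have "\<dots> = (\<Sum>j\<le>m. coeff p j * X powi ((2 * int j - int m) * int s))"
    proof (intro sum.cong refl arg_cong[where f="\<lambda>x. _ * x"])
      fix j
      have "((X^2)^s)^j / X^(m*s) = X^(2*s*j) / X^(m*s)"
        by (simp add: power_mult[symmetric] mult.commute mult.left_commute)
      also have "\<dots> = X powi (int (2*s*j)) / X powi (int (m*s))"
        by (simp only: power_int_of_nat)
      also have "\<dots> = X powi (int (2*s*j) - int (m*s))" using X_nz by (simp add: power_int_diff)
      finally show "((X^2)^s)^j / X^(m*s) = X powi ((2 * int j - int m) * int s)"
        by (simp add: algebra_simps)
    qed
    finally show ?thesis .
  qed
  have "(\<Sum>s\<le>r. (-1)^s * qbinom (int r) s * g s)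
      = (\<Sum>s\<le>r. \<Sum>j\<le>m. coeff p j * ((-1)^s * qbinom (int r) s * X powi ((2 * int j - int m) * int s)))"
    unfolding g sum_distrib_left by (simp only: mult_ac)
  also have "\<dots> = (\<Sum>j\<le>m. \<Sum>s\<le>r. coeff p j * ((-1)^s * qbinom (int r) s * X powi ((2 * int j - int m) * int s)))"
    by (rule sum.swap)
  also have "\<dots> = (\<Sum>j\<le>m. coeff p j * S r (2 * int j - int m))"
    unfolding S_def sum_distrib_left ..
  also have "\<dots> = 0"
  proof (intro sum.neutral ballI)
    fix j assume "j \<in> {..m}"
    hence j: "int j \<le> int r - 1" using assms(1) unfolding m_def by simp
    have mm: "int m = int r - 1" using assms(1) unfolding m_def by simp
    have "S r (2 * int j - int m) = 0" unfolding mm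
      by (rule S_zero) (use j in auto)
    thus "coeff p j * S r (2 * int j - int m) = 0" by simp
  qed
  finally show ?thesis .
qed

theorem lemma5p6:
  fixes r t :: nat and k :: int
  assumes "r \<ge> 2" and "1 \<le> t" and "t \<le> r"
  shows "(\<Sum>s = 0..r. (-1) ^ s * qbinom (int r) s * qbinom (int t + k - int s - 1) (t - 1)
            * qbinom (int r + k - int s) (r - t)) = 0"
proof -
  have "good ((t-1) + (r-t)) (\<lambda>s. qbinom ((int t + k - 1) - int s) (t - 1) * qbinom ((int r + k) - int s) (r - t))"
    by (rule good_mult[OF good_qbinom good_qbinom])
  moreover have "(t-1) + (r-t) = r - 1" using assms by simp
  ultimately have "good (r-1) (\<lambda>s. qbinom (int t + k - int s - 1) (t - 1) * qbinom (int r + k - int s) (r - t))"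
    by (simp add: algebra_simps)
  from vanish[OF _ this] assms show ?thesis
    by (simp add: atLeast0AtMost mult.assoc)
qed

end
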